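(* Let $T$ be a triangulation of the oriented 2-sphere (a simplicial complex), $z:\mathcal V(T)\to\mathbb C$ injective with no degenerate face. Let $\mathcal A_T=-\sum_f\mathrm{Vol}(f)$, the sum over all faces listed in positive cyclic order, and $D_{u\bar v}=\frac{\partial^2\mathcal A_T}{\partial z_u\partial\bar z_v}$. Then, as matrices indexed by $\mathcal V(T)$, $$D=\frac1{4\mathrm i}\,A\,E\,A^\dagger,$$ where $A^\dagger$ is the conjugate transpose of $A$.
   Context: For a face listed $(z_a,z_b,z_c)$, $\mathrm{Vol}=\mathrm{Im}\,\mathrm{Li}_2(u)+\ln|u|\,\mathrm{Arg}(1-u)$, $u=\frac{z_c-z_a}{z_b-z_a}$ (Bloch–Wigner function). $A_{v,e}=\frac1{z_v-z_{v'}}$ if $e=\{v,v'\}$ and $0$ if $v\notin e$. $E_{e,e'}$: for $e\neq e'$ in a common face with edges $\{a,b\},\{b,c\},\{c,a\}$ in positive cyclic order, $E_{e,e'}=-1$ if $e'$ immediately follows $e$ and $+1$ if $e'$ immediately precedes $e$; otherwise $0$. Derivatives are Wirtinger derivatives. *)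

theory Defs
  imports "HOL-Analysis.Analysis"
begin

text \<open>Principal branch of the dilogarithm, Li2(u) = - int_0^u Log(1-t)/t dt along the
  straight segment from 0 to u (analytic on the complement of [1, infinity)).\<close>
definition Li2 :: "complex \<Rightarrow> complex" where
  "Li2 u = - integral {0..1::real} (\<lambda>s. Ln (1 - complex_of_real s * u) / complex_of_real s)"

definition bloch_wigner :: "complex \<Rightarrow> real" where
  "bloch_wigner u = Im (Li2 u) + ln (cmod u) * Arg (1 - u)"

definition Vol :: "complex \<Rightarrow> complex \<Rightarrow> complex \<Rightarrow> real" where
  "Vol za zb zc = bloch_wigner ((zc - za) / (zb - za))"

text \<open>An abstract pure 2-dimensional simplicial complex on the (finite) vertex type 'v
  is given by its set S of 2-simplices; its geometric realization in real^'v uses the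
  standard basis vectors as vertices.\<close>
definition realization :: "('v::finite) set set \<Rightarrow> (real ^ 'v) set" where
  "realization S = (\<Union>f\<in>S. convex hull ((\<lambda>i. axis i (1::real)) ` f))"

definition edges :: "'v set set \<Rightarrow> 'v set set" where
  "edges S = {e. card e = 2 \<and> (\<exists>f\<in>S. e \<subseteq> f)}"

definition sphere_triangulation :: "('v::finite) set set \<Rightarrow> bool" where
  "sphere_triangulation S \<longleftrightarrow>
     (\<forall>f\<in>S. card f = 3) \<and> \<Union>S = UNIV \<and>
     realization S homeomorphic sphere (0::real^3) 1"

text \<open>pos is the set of listings (a,b,c) of faces in positive cyclic order: it is closed
  under cyclic rotation, each face has such a listing, no face has both cyclic orders,
  and the orientation is coherent (each directed edge (a,b) occurs in at most one
  positively listed face), i.e. it comes from an orientation of the sphere.\<close>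
definition orientation :: "'v set set \<Rightarrow> ('v \<times> 'v \<times> 'v) set \<Rightarrow> bool" where
  "orientation S pos \<longleftrightarrow>
     (\<forall>(a,b,c)\<in>pos. {a,b,c} \<in> S \<and> (b,c,a) \<in> pos \<and> (a,c,b) \<notin> pos) \<and>
     (\<forall>f\<in>S. \<exists>a b c. (a,b,c) \<in> pos \<and> f = {a,b,c}) \<and>
     (\<forall>a b c c'. (a,b,c) \<in> pos \<longrightarrow> (a,b,c') \<in> pos \<longrightarrow> c = c')"

definition listing :: "('v \<times> 'v \<times> 'v) set \<Rightarrow> 'v set \<Rightarrow> 'v \<times> 'v \<times> 'v" where
  "listing pos f = (SOME t. t \<in> pos \<and> f = {fst t, fst (snd t), snd (snd t)})"

definition nondegenerate :: "('v \<Rightarrow> complex) \<Rightarrow> 'v set \<Rightarrow> bool" where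
  "nondegenerate z f \<longleftrightarrow> (\<forall>a\<in>f. \<forall>b\<in>f. \<forall>c\<in>f. a \<noteq> b \<longrightarrow> Im ((z c - z a) / (z b - z a)) = 0 \<longrightarrow> c = a \<or> c = b)"

definition action :: "'v set set \<Rightarrow> ('v \<times> 'v \<times> 'v) set \<Rightarrow> ('v \<Rightarrow> complex) \<Rightarrow> real" where
  "action S pos z = - (\<Sum>f\<in>S. (case listing pos f of (a,b,c) \<Rightarrow> Vol (z a) (z b) (z c)))"

definition pdx :: "'v \<Rightarrow> (('v \<Rightarrow> complex) \<Rightarrow> complex) \<Rightarrow> ('v \<Rightarrow> complex) \<Rightarrow> complex" where
  "pdx u F z = vector_derivative (\<lambda>t::real. F (z(u := z u + complex_of_real t))) (at 0)"

definition pdy :: "'v \<Rightarrow> (('v \<Rightarrow> complex) \<Rightarrow> complex) \<Rightarrow> ('v \<Rightarrow> complex) \<Rightarrow> complex" where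
  "pdy u F z = vector_derivative (\<lambda>t::real. F (z(u := z u + \<i> * complex_of_real t))) (at 0)"

definition wirt_z :: "'v \<Rightarrow> (('v \<Rightarrow> complex) \<Rightarrow> complex) \<Rightarrow> ('v \<Rightarrow> complex) \<Rightarrow> complex" where
  "wirt_z u F z = (pdx u F z - \<i> * pdy u F z) / 2"

definition wirt_zbar :: "'v \<Rightarrow> (('v \<Rightarrow> complex) \<Rightarrow> complex) \<Rightarrow> ('v \<Rightarrow> complex) \<Rightarrow> complex" where
  "wirt_zbar u F z = (pdx u F z + \<i> * pdy u F z) / 2"

definition Amat :: "('v \<Rightarrow> complex) \<Rightarrow> 'v \<Rightarrow> 'v set \<Rightarrow> complex" where
  "Amat z v e = (if v \<in> e then 1 / (z v - z (THE w. w \<in> e \<and> w \<noteq> v)) else 0)"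

definition Emat :: "('v \<times> 'v \<times> 'v) set \<Rightarrow> 'v set \<Rightarrow> 'v set \<Rightarrow> complex" where
  "Emat pos e e' =
     (if e \<noteq> e' \<and> (\<exists>a b c. (a,b,c) \<in> pos \<and> e = {a,b} \<and> e' = {b,c}) then -1
      else if e \<noteq> e' \<and> (\<exists>a b c. (a,b,c) \<in> pos \<and> e = {b,c} \<and> e' = {a,b}) then 1
      else 0)"

end

theory Submission
  imports Defs "HOL-Complex_Analysis.Complex_Analysis"
begin


definition g0 :: "complex \<Rightarrow> complex" where "g0 t = (if t = 0 then -1 else Ln(1-t)/t)"
definition SL :: "complex set" where "SL = {t. Im t \<noteq> 0 \<or> Re t < 1}"

lemma SL_open: "open SL"
proof -
  have "SL = {t. Im t \<noteq> 0} \<union> {t. Re t < 1}" by (auto simp: SL_def)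
  moreover have "open {t. Im t \<noteq> 0}"
    by (rule open_Collect_neq) (auto intro: continuous_intros)
  moreover have "open {t. Re t < 1}"
    by (rule open_Collect_less) (auto intro: continuous_intros)
  ultimately show ?thesis by (metis open_Un)
qed

lemma SL_Ln: "t \<in> SL \<Longrightarrow> 1 - t \<notin> \<real>\<^sub>\<le>\<^sub>0"
  by (auto simp: SL_def complex_nonpos_Reals_iff)

lemma g0_isCont: assumes "x \<in> SL" shows "isCont g0 x"
proof (cases "x = 0")
  case True
  have "((\<lambda>t. Ln (1 - t)) has_field_derivative inverse (1 - 0) * (-1)) (at 0)"
    by (rule DERIV_chain2[of Ln]) (auto intro!: has_field_derivative_Ln derivative_eq_intros simp: complex_nonpos_Reals_iff)
  then have "((\<lambda>y. (Ln (1 - y) - Ln (1 - 0)) / (y - 0)) \<longlongrightarrow> -1) (at 0)"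
    by (simp add: has_field_derivative_iff)
  then have "((\<lambda>y. Ln (1 - y) / y) \<longlongrightarrow> -1) (at 0)" by simp
  then have "(g0 \<longlongrightarrow> -1) (at 0)"
    by (rule Lim_transform_eventually) (auto simp: g0_def eventually_at_filter)
  then show ?thesis using True by (simp add: continuous_at g0_def)
next
  case False
  have "isCont (\<lambda>t. Ln(1-t)/t) x"
    using False SL_Ln[OF assms]
    by (auto intro!: continuous_intros isCont_o2[where g=Ln] simp: complex_nonpos_Reals_iff)
  moreover have "eventually (\<lambda>t. g0 t = Ln(1-t)/t) (nhds x)"
    using eventually_nhds_in_open[of "-{0}" x] False
    by (auto simp: g0_def elim!: eventually_mono)
  ultimately show ?thesis using isCont_cong[of g0 "\<lambda>t. Ln(1-t)/t" x] by blast
qed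

lemma g0_cont: "continuous_on SL g0"
  using g0_isCont by (simp add: continuous_at_imp_continuous_on)

lemma g0_diff: assumes "x \<in> SL - {0}" shows "g0 field_differentiable at x"
proof -
  have l: "((\<lambda>t. Ln (1 - t)) has_field_derivative inverse (1 - x) * (-1)) (at x)"
    by (rule DERIV_chain2[of Ln]) (use assms SL_Ln[of x] in \<open>auto intro!: has_field_derivative_Ln derivative_eq_intros\<close>)
  obtain d where d: "((\<lambda>t. Ln(1-t)/t) has_field_derivative d) (at x)"
    using DERIV_divide[OF l DERIV_ident] assms by auto
  have "(g0 has_field_derivative d) (at x)"
    by (rule has_field_derivative_transform_within_open[OF d, of "-{0}"]) (use assms in \<open>auto simp: g0_def\<close>)
  then show ?thesis by (auto simp: field_differentiable_def)
qed

lemma SL_seg: assumes "y \<in> SL" shows "closed_segment 0 y \<subseteq> SL"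
proof
  fix x assume "x \<in> closed_segment 0 y"
  then obtain s::real where s: "0 \<le> s" "s \<le> 1" "x = s *\<^sub>R y"
    by (auto simp: closed_segment_def)
  show "x \<in> SL"
  proof (cases "s = 0")
    case True then show ?thesis using s by (simp add: SL_def)
  next
    case False
    then have "s > 0" using s by simp
    then show ?thesis using assms s
      apply (auto simp: SL_def)
      by (smt (verit, best) mult_le_cancel_left1 mult_left_le_one_le)
  qed
qed

lemma SL_0: "0 \<in> SL" by (simp add: SL_def)

lemma g0_primitive: assumes "x \<in> SL"
  shows "((\<lambda>x. contour_integral (linepath 0 x) g0) has_field_derivative g0 x) (at x)"
proof (rule triangle_contour_integrals_starlike_primitive[OF g0_cont SL_0 SL_open assms SL_seg])
  fix b c assume bc: "closed_segment b c \<subseteq> SL"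
  have "b \<in> SL" using bc by auto
  then have abcs: "convex hull {0, b, c} \<subseteq> SL"
    using starlike_convex_subset[of 0 SL b c] SL_seg bc SL_0 by blast
  then have "continuous_on (convex hull {0, b, c}) g0"
    by (simp add: continuous_on_subset [OF g0_cont])
  then have "(g0 has_contour_integral 0) (linepath 0 b +++ linepath b c +++ linepath c 0)"
    using abcs interior_subset
    by (force intro: g0_diff Cauchy_theorem_triangle_cofinite [of _ _ _ _ "{0}"])
  then show "contour_integral (linepath 0 b) g0 + contour_integral (linepath b c) g0 +
           contour_integral (linepath c 0) g0 = 0"
    by (rule has_chain_integral_chain_integral3)
qed

lemma Li2_ci: assumes "u \<in> SL" shows "Li2 u = - contour_integral (linepath 0 u) g0"
proof -
  have "continuous_on (closed_segment 0 u) g0"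
    using continuous_on_subset[OF g0_cont SL_seg[OF assms]] .
  then have "g0 contour_integrable_on linepath 0 u"
    by (rule contour_integrable_continuous_linepath)
  then have "(g0 has_contour_integral contour_integral (linepath 0 u) g0) (linepath 0 u)"
    by (rule has_contour_integral_integral)
  then have HI: "((\<lambda>x. g0 (linepath 0 u x) * (u - 0)) has_integral contour_integral (linepath 0 u) g0) {0..1}"
    by (simp add: has_contour_integral_linepath)
  have "((\<lambda>s. Ln (1 - complex_of_real s * u) / complex_of_real s) has_integral contour_integral (linepath 0 u) g0) {0..1}"
  proof (rule has_integral_spike_finite[of "{0}", OF _ _ HI])
    fix x assume "x \<in> {0..1::real} - {0}"
    then have "x \<noteq> 0" by auto
    then show "Ln (1 - complex_of_real x * u) / complex_of_real x = g0 (linepath 0 u x) * (u - 0)"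
      by (cases "u = 0") (auto simp: g0_def linepath_def scaleR_conv_of_real)
  qed auto
  then show ?thesis by (simp add: Li2_def integral_unique)
qed

lemma Li2_deriv: assumes "Im u \<noteq> 0" shows "(Li2 has_field_derivative - (Ln (1 - u) / u)) (at u)"
proof -
  have u: "u \<in> SL" "u \<noteq> 0" using assms by (auto simp: SL_def)
  have "((\<lambda>x. - contour_integral (linepath 0 x) g0) has_field_derivative - g0 u) (at u)"
    using g0_primitive[OF u(1)] by (rule DERIV_minus)
  then have "(Li2 has_field_derivative - g0 u) (at u)"
    by (rule has_field_derivative_transform_within_open[OF _ SL_open u(1)]) (simp add: Li2_ci)
  then show ?thesis using u by (simp add: g0_def)
qed



definition wd :: "(complex \<Rightarrow> complex) \<Rightarrow> complex \<Rightarrow> complex \<Rightarrow> complex \<Rightarrow> bool" where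
  "wd \<phi> \<zeta> p q \<longleftrightarrow> (\<phi> has_derivative (\<lambda>h. p*h + q*cnj h)) (at \<zeta>)"

lemma wd_cong: "wd \<phi> \<zeta> p q \<Longrightarrow> p = p' \<Longrightarrow> q = q' \<Longrightarrow> wd \<phi> \<zeta> p' q'" by simp

lemma wd_holo: "(f has_field_derivative d) (at \<zeta>) \<Longrightarrow> wd f \<zeta> d 0"
  by (simp add: wd_def has_field_derivative_def)

lemma wd_const: "wd (\<lambda>x. c) \<zeta> 0 0"
  by (simp add: wd_def)

lemma wd_cnj: assumes "wd f \<zeta> p q" shows "wd (\<lambda>x. cnj (f x)) \<zeta> (cnj q) (cnj p)"
proof -
  have "((\<lambda>x. cnj (f x)) has_derivative (\<lambda>h. cnj (p*h + q*cnj h))) (at \<zeta>)"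
    using bounded_linear.has_derivative[OF bounded_linear_cnj assms[unfolded wd_def]] .
  moreover have "(\<lambda>h. cnj (p*h + q*cnj h)) = (\<lambda>h. cnj q * h + cnj p * cnj h)"
    by (auto simp: algebra_simps)
  ultimately show ?thesis by (simp add: wd_def)
qed

lemma wd_add: assumes "wd f \<zeta> p q" "wd g \<zeta> p' q'" shows "wd (\<lambda>x. f x + g x) \<zeta> (p+p') (q+q')"
proof -
  have "((\<lambda>x. f x + g x) has_derivative (\<lambda>h. (p*h + q*cnj h) + (p'*h + q'*cnj h))) (at \<zeta>)"
    using has_derivative_add[OF assms[unfolded wd_def]] .
  moreover have "(\<lambda>h. (p*h + q*cnj h) + (p'*h + q'*cnj h)) = (\<lambda>h. (p+p')*h + (q+q')*cnj h)"
    by (rule ext) (simp add: distrib_right)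
  ultimately show ?thesis by (simp add: wd_def)
qed

lemma wd_minus: assumes "wd f \<zeta> p q" shows "wd (\<lambda>x. - f x) \<zeta> (-p) (-q)"
proof -
  have "((\<lambda>x. - f x) has_derivative (\<lambda>h. - (p*h + q*cnj h))) (at \<zeta>)"
    using has_derivative_minus[OF assms[unfolded wd_def]] .
  moreover have "(\<lambda>h. - (p*h + q*cnj h)) = (\<lambda>h. (-p)*h + (-q)*cnj h)"
    by (rule ext) simp
  ultimately show ?thesis by (simp add: wd_def)
qed

lemma wd_diff: assumes "wd f \<zeta> p q" "wd g \<zeta> p' q'" shows "wd (\<lambda>x. f x - g x) \<zeta> (p-p') (q-q')"
  using wd_add[OF assms(1) wd_minus[OF assms(2)]] by simp

lemma wd_mult: assumes "wd f \<zeta> p q" "wd g \<zeta> p' q'" shows 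
   "wd (\<lambda>x. f x * g x) \<zeta> (f \<zeta> * p' + p * g \<zeta>) (f \<zeta> * q' + q * g \<zeta>)"
proof -
  have "((\<lambda>x. f x * g x) has_derivative (\<lambda>h. f \<zeta> * (p'*h + q'*cnj h) + (p*h + q*cnj h) * g \<zeta>)) (at \<zeta>)"
    using has_derivative_mult[OF assms[unfolded wd_def]] .
  moreover have "(\<lambda>h. f \<zeta> * (p'*h + q'*cnj h) + (p*h + q*cnj h) * g \<zeta>) = (\<lambda>h. (f \<zeta> * p' + p * g \<zeta>)*h + (f \<zeta> * q' + q * g \<zeta>)*cnj h)"
    by (rule ext) (simp add: distrib_right distrib_left mult.commute mult.left_commute)
  ultimately show ?thesis by (simp add: wd_def)
qed

lemma wd_cmult: "wd f \<zeta> p q \<Longrightarrow> wd (\<lambda>x. c * f x) \<zeta> (c*p) (c*q)"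
  using wd_mult[OF wd_const, of f \<zeta> p q c] by simp

lemma wd_sum: "finite I \<Longrightarrow> (\<And>i. i \<in> I \<Longrightarrow> wd (f i) \<zeta> (p i) (q i)) \<Longrightarrow>
   wd (\<lambda>x. \<Sum>i\<in>I. f i x) \<zeta> (\<Sum>i\<in>I. p i) (\<Sum>i\<in>I. q i)"
  unfolding wd_def by (drule has_derivative_sum) (simp add: sum_distrib_right sum.distrib)

lemma wd_comp: assumes "wd \<phi> (U \<zeta>) p q" "(U has_field_derivative d) (at \<zeta>)"
  shows "wd (\<lambda>x. \<phi> (U x)) \<zeta> (p*d) (q*cnj d)"
proof -
  have "((\<phi> \<circ> U) has_derivative ((\<lambda>h. p*h + q*cnj h) \<circ> (\<lambda>h. d*h))) (at \<zeta>)"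
    using diff_chain_at[OF assms(2)[unfolded has_field_derivative_def] assms(1)[unfolded wd_def]] .
  moreover have "((\<lambda>h. p*h + q*cnj h) \<circ> (\<lambda>h. d*h)) = (\<lambda>h. (p*d)*h + (q*cnj d)*cnj h)"
    by (auto simp: algebra_simps)
  ultimately show ?thesis by (simp add: wd_def o_def)
qed

lemma wd_transform: "wd \<phi> \<zeta> p q \<Longrightarrow> open S \<Longrightarrow> \<zeta> \<in> S \<Longrightarrow> (\<And>x. x \<in> S \<Longrightarrow> \<phi> x = \<psi> x) \<Longrightarrow> wd \<psi> \<zeta> p q"
  unfolding wd_def using has_derivative_transform_within_open[of \<phi> _ \<zeta> UNIV S \<psi>] by auto

lemma wd_line:
  assumes "wd \<phi> \<zeta> p q" and c: "c = 1 \<or> c = \<i>"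
  shows "((\<lambda>t::real. \<phi> (\<zeta> + c * of_real t)) has_vector_derivative (c*p + cnj c * q)) (at 0)"
proof -
  have l: "((\<lambda>t::real. \<zeta> + c * of_real t) has_derivative (\<lambda>h. c * of_real h)) (at 0)"
    by (auto intro!: derivative_eq_intros)
  have "((\<phi> \<circ> (\<lambda>t::real. \<zeta> + c * of_real t)) has_derivative ((\<lambda>h. p*h + q*cnj h) \<circ> (\<lambda>h. c * of_real h))) (at 0)"
    using diff_chain_at[OF l] assms(1)[unfolded wd_def] by simp
  moreover have "((\<lambda>h. p*h + q*cnj h) \<circ> (\<lambda>h. c * of_real h)) = (\<lambda>h::real. h *\<^sub>R (c*p + cnj c * q))"
    by (auto simp: algebra_simps scaleR_conv_of_real)
  ultimately show ?thesis by (simp add: has_vector_derivative_def o_def)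
qed

lemma fun_upd_add: "(z(u := z u + x)) = z(u := z u + x)" by simp

lemma wirt_main:
  fixes G :: "('v \<Rightarrow> complex) \<Rightarrow> complex"
  assumes w: "wd \<phi> (z u) p q" and o: "open \<Omega>" and zu: "z u \<in> \<Omega>"
    and eq: "\<And>\<zeta>. \<zeta> \<in> \<Omega> \<Longrightarrow> G (z(u := \<zeta>)) = \<phi> \<zeta>"
  shows "wirt_z u G z = p" "wirt_zbar u G z = q"
proof -
  have line: "vector_derivative (\<lambda>t::real. G (z(u := z u + c * of_real t))) (at 0) = c*p + cnj c * q"
    if c: "c = 1 \<or> c = \<i>" for c
  proof -
    let ?T = "(\<lambda>t::real. z u + c * of_real t) -` \<Omega>"
    have oT: "open ?T"
      by (rule open_vimage[OF o]) (auto intro!: continuous_intros)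
    have "((\<lambda>t::real. G (z(u := z u + c * of_real t))) has_vector_derivative (c*p + cnj c * q)) (at 0)"
      by (rule has_vector_derivative_transform_within_open[OF wd_line[OF w c] oT]) (use zu eq in auto)
    then show ?thesis by (rule vector_derivative_at)
  qed
  have dx: "pdx u G z = p + q" using line[of 1] by (simp add: pdx_def)
  have dy: "pdy u G z = \<i>*p - \<i>*q" using line[of \<i>] by (simp add: pdy_def)
  show "wirt_z u G z = p" by (simp add: wirt_z_def dx dy algebra_simps)
  show "wirt_zbar u G z = q" by (simp add: wirt_zbar_def dx dy algebra_simps)
qed



lemma of_real_Im: "complex_of_real (Im w) = (1/(2*\<i>))*(w - cnj w)"
  by (simp add: complex_diff_cnj mult.commute[of _ \<i>] mult.assoc[symmetric])

lemma of_real_Re: "complex_of_real (Re w) = (1/2)*(w + cnj w)"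
  by (simp add: complex_add_cnj)

definition BWc :: "complex \<Rightarrow> complex" where
  "BWc x = (1/(2*\<i>)) * (Li2 x - cnj (Li2 x)) + ((1/2) * (Ln x + cnj (Ln x))) * ((1/(2*\<i>)) * (Ln (1 - x) - cnj (Ln (1 - x))))"

lemma BW_BWc: assumes "Im x \<noteq> 0" shows "complex_of_real (bloch_wigner x) = BWc x"
proof -
  have x: "x \<noteq> 0" "1 - x \<noteq> 0" using assms by auto
  have "complex_of_real (bloch_wigner x) = of_real (Im (Li2 x)) + of_real (Re (Ln x)) * of_real (Im (Ln (1-x)))"
    using x by (simp add: bloch_wigner_def Arg_eq_Im_Ln)
  then show ?thesis by (simp only: of_real_Im of_real_Re BWc_def)
qed

definition qn :: "complex \<Rightarrow> complex" where
  "qn x = (1/(4*\<i>)) * ((Ln (1-x) + cnj (Ln (1-x))) * cnj (inverse x) + (Ln x + cnj (Ln x)) * cnj (inverse (1 - x)))"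

definition rn :: "complex \<Rightarrow> complex" where
  "rn x = (1/(4*\<i>)) * (1/(x*(1 - cnj x)) - 1/(cnj x * (1 - x)))"

lemma Ln_d: "Im x \<noteq> 0 \<Longrightarrow> wd Ln x (inverse x) 0"
  by (rule wd_holo, rule has_field_derivative_Ln) (auto simp: complex_nonpos_Reals_iff)

lemma Ln1_d: assumes "Im x \<noteq> 0" shows "wd (\<lambda>x. Ln (1 - x)) x (inverse (1 - x) * (-1)) 0"
  by (rule wd_holo, rule DERIV_chain2[of Ln]) (use assms in \<open>auto intro!: has_field_derivative_Ln derivative_eq_intros simp: complex_nonpos_Reals_iff\<close>)

lemma BWc_wd: assumes "Im x \<noteq> 0" shows "wd BWc x (cnj (qn x)) (qn x)"
proof -
  have x: "x \<noteq> 0" "1 - x \<noteq> 0" "cnj x \<noteq> 0" "1 - cnj x \<noteq> 0" using assms by (auto simp: complex_eq_iff)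
  have li: "wd Li2 x (- (Ln (1 - x) / x)) 0" using Li2_deriv[OF assms] by (rule wd_holo)
  note A = wd_cmult[OF wd_diff[OF li wd_cnj[OF li]], of "1/(2*\<i>)"]
  note B = wd_cmult[OF wd_add[OF Ln_d[OF assms] wd_cnj[OF Ln_d[OF assms]]], of "1/2"]
  note C = wd_cmult[OF wd_diff[OF Ln1_d[OF assms] wd_cnj[OF Ln1_d[OF assms]]], of "1/(2*\<i>)"]
  note D = wd_add[OF A wd_mult[OF B C]]
  show ?thesis unfolding BWc_def
    apply (rule wd_cong[OF D])
    using x by (simp_all add: qn_def field_simps)
qed

lemma inv_d: assumes "x \<noteq> 0" shows "wd (\<lambda>x. inverse x) x (- (inverse x * inverse x)) 0"
  by (rule wd_holo) (use assms in \<open>auto intro!: derivative_eq_intros\<close>)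

lemma inv1_d: assumes "1 - x \<noteq> 0" shows "wd (\<lambda>x. inverse (1 - x)) x (inverse ((1 - x) * (1 - x))) 0"
  by (rule wd_holo) (use assms in \<open>auto intro!: derivative_eq_intros simp: field_simps power2_eq_square\<close>)

lemma qn_wd: assumes "Im x \<noteq> 0" shows "\<exists>s. wd qn x (rn x) s"
proof -
  have x: "x \<noteq> 0" "1 - x \<noteq> 0" "cnj x \<noteq> 0" "1 - cnj x \<noteq> 0" using assms by (auto simp: complex_eq_iff)
  note D = wd_cmult[OF wd_add[OF wd_mult[OF wd_add[OF Ln1_d[OF assms] wd_cnj[OF Ln1_d[OF assms]]] wd_cnj[OF inv_d[OF x(1)]]]
              wd_mult[OF wd_add[OF Ln_d[OF assms] wd_cnj[OF Ln_d[OF assms]]] wd_cnj[OF inv1_d[OF x(2)]]]], of "1/(4*\<i>)"]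
  show ?thesis unfolding qn_def
    apply (rule exI)
    apply (rule wd_cong[OF D])
    using x by (simp_all add: rn_def field_simps)
qed



definition dl :: "'v \<Rightarrow> 'v \<Rightarrow> complex" where "dl x u = (if x = u then 1 else 0)"

definition Uf :: "'v \<Rightarrow> 'v \<Rightarrow> 'v \<Rightarrow> ('v \<Rightarrow> complex) \<Rightarrow> complex" where
  "Uf a b c w = (w c - w a) / (w b - w a)"

definition dU :: "'v \<Rightarrow> 'v \<Rightarrow> 'v \<Rightarrow> 'v \<Rightarrow> ('v \<Rightarrow> complex) \<Rightarrow> complex" where
  "dU a b c u w = ((dl c u - dl a u) * (w b - w a) - (w c - w a) * (dl b u - dl a u)) / ((w b - w a) * (w b - w a))"

definition good3 :: "'v \<Rightarrow> 'v \<Rightarrow> 'v \<Rightarrow> ('v \<Rightarrow> complex) \<Rightarrow> bool" where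
  "good3 a b c w \<longleftrightarrow> Im ((w c - w a) * cnj (w b - w a)) \<noteq> 0"

lemma upd: "(w(u := \<zeta>)) x = w x + dl x u * (\<zeta> - w u)"
  by (simp add: dl_def)

lemma good3_ne: "good3 a b c w \<Longrightarrow> w b \<noteq> w a"
  by (auto simp: good3_def)

lemma good3_Im: assumes "good3 a b c w" shows "Im (Uf a b c w) \<noteq> 0"
proof -
  have "Im (Uf a b c w) = Im ((w c - w a) * cnj (w b - w a)) / (cmod (w b - w a))^2"
    by (simp add: Uf_def Im_divide cmod_power2 algebra_simps)
  then show ?thesis using assms good3_ne[OF assms] by (simp add: good3_def)
qed

lemma U_deriv: assumes "w b \<noteq> w a"
  shows "((\<lambda>\<zeta>. Uf a b c (w(u := \<zeta>))) has_field_derivative dU a b c u w) (at (w u))"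
proof -
  have e: "(\<lambda>\<zeta>. Uf a b c (w(u := \<zeta>))) = (\<lambda>\<zeta>. ((w c + dl c u * (\<zeta> - w u)) - (w a + dl a u * (\<zeta> - w u))) /
      ((w b + dl b u * (\<zeta> - w u)) - (w a + dl a u * (\<zeta> - w u))))"
    by (simp only: Uf_def upd)
  show ?thesis unfolding e
    apply (rule derivative_eq_intros refl)+
    using assms apply simp
    apply (simp add: algebra_simps dU_def)
    done
qed

lemma dU_deriv: assumes "w b \<noteq> w a"
  shows "\<exists>d. ((\<lambda>\<zeta>. dU a b c v (w(u := \<zeta>))) has_field_derivative d) (at (w u))"
proof -
  have e: "(\<lambda>\<zeta>. dU a b c v (w(u := \<zeta>))) = (\<lambda>\<zeta>. ((dl c v - dl a v) * ((w b + dl b u * (\<zeta> - w u)) - (w a + dl a u * (\<zeta> - w u)))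
     - ((w c + dl c u * (\<zeta> - w u)) - (w a + dl a u * (\<zeta> - w u))) * (dl b v - dl a v)) /
      (((w b + dl b u * (\<zeta> - w u)) - (w a + dl a u * (\<zeta> - w u))) * ((w b + dl b u * (\<zeta> - w u)) - (w a + dl a u * (\<zeta> - w u)))))"
    by (simp only: dU_def upd)
  show ?thesis unfolding e
    apply (rule exI)
    apply (rule derivative_eq_intros refl)+
    using assms apply simp
    apply (rule refl)
    done
qed



definition sn :: "complex \<Rightarrow> complex" where "sn x = (SOME s. wd qn x (rn x) s)"

lemma qn_wd': "Im x \<noteq> 0 \<Longrightarrow> wd qn x (rn x) (sn x)"
  unfolding sn_def using qn_wd by (rule someI_ex)

definition ddU where "ddU a b c v u w = (SOME d. ((\<lambda>\<zeta>. dU a b c v (w(u := \<zeta>))) has_field_derivative d) (at (w u)))"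

lemma dU_deriv': "w b \<noteq> w a \<Longrightarrow> ((\<lambda>\<zeta>. dU a b c v (w(u := \<zeta>))) has_field_derivative ddU a b c v u w) (at (w u))"
  unfolding ddU_def by (rule someI_ex, rule dU_deriv)

lemma open_Im: "open {y::complex. Im y \<noteq> 0}"
  by (rule open_Collect_neq) (auto intro: continuous_intros)

lemma BW_wd: assumes "Im x \<noteq> 0" shows "wd (\<lambda>y. complex_of_real (bloch_wigner y)) x (cnj (qn x)) (qn x)"
  by (rule wd_transform[OF BWc_wd[OF assms] open_Im]) (use assms BW_BWc in auto)

lemma face1: assumes g: "good3 a b c w"
  shows "wd (\<lambda>\<zeta>. complex_of_real (Vol ((w(v:=\<zeta>)) a) ((w(v:=\<zeta>)) b) ((w(v:=\<zeta>)) c))) (w v)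
           (cnj (qn (Uf a b c w)) * dU a b c v w) (qn (Uf a b c w) * cnj (dU a b c v w))"
proof -
  have "wd (\<lambda>y. complex_of_real (bloch_wigner y)) (Uf a b c (w(v := w v))) (cnj (qn (Uf a b c w))) (qn (Uf a b c w))"
    using BW_wd[OF good3_Im[OF g]] by simp
  from wd_comp[OF this U_deriv[where w=w and a=a and b=b and c=c and u=v, OF good3_ne[OF g]]]
  show ?thesis by (simp add: Vol_def Uf_def)
qed

lemma face2: assumes g: "good3 a b c z"
  shows "wd (\<lambda>\<zeta>. qn (Uf a b c (z(u:=\<zeta>))) * cnj (dU a b c v (z(u:=\<zeta>)))) (z u)
           (rn (Uf a b c z) * dU a b c u z * cnj (dU a b c v z))
           (qn (Uf a b c z) * cnj (ddU a b c v u z) + sn (Uf a b c z) * cnj (dU a b c u z) * cnj (dU a b c v z))"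
proof -
  have A: "wd qn (Uf a b c (z(u := z u))) (rn (Uf a b c z)) (sn (Uf a b c z))"
    using qn_wd'[OF good3_Im[OF g]] by simp
  note B = wd_comp[OF A U_deriv[where w=z and a=a and b=b and c=c and u=u, OF good3_ne[OF g]]]
  note C = wd_cnj[OF wd_holo[OF dU_deriv'[where w=z and a=a and b=b and c=c and u=u and v=v, OF good3_ne[OF g]]]]
  show ?thesis using wd_mult[OF B C] by simp
qed

definition la where "la pos f = fst (listing pos f)"
definition lb where "lb pos f = fst (snd (listing pos f))"
definition lc where "lc pos f = snd (snd (listing pos f))"

lemma action_eq: "action S pos w = - (\<Sum>f\<in>S. Vol (w (la pos f)) (w (lb pos f)) (w (lc pos f)))"
  by (simp add: action_def la_def lb_def lc_def split_beta)

definition goodall where "goodall S pos w \<longleftrightarrow> (\<forall>f\<in>S. good3 (la pos f) (lb pos f) (lc pos f) w)"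

definition Q1 where "Q1 S pos w v = - (\<Sum>f\<in>S. qn (Uf (la pos f) (lb pos f) (lc pos f) w) * cnj (dU (la pos f) (lb pos f) (lc pos f) v w))"

lemma first_deriv:
  fixes S :: "'v set set"
  assumes fin: "finite S" and g: "goodall S pos w"
  shows "wirt_zbar v (\<lambda>w. complex_of_real (action S pos w)) w = Q1 S pos w v"
proof -
  have "wd (\<lambda>\<zeta>. - (\<Sum>f\<in>S. complex_of_real (Vol ((w(v:=\<zeta>)) (la pos f)) ((w(v:=\<zeta>)) (lb pos f)) ((w(v:=\<zeta>)) (lc pos f))))) (w v)
     (- (\<Sum>f\<in>S. cnj (qn (Uf (la pos f) (lb pos f) (lc pos f) w)) * dU (la pos f) (lb pos f) (lc pos f) v w))
     (Q1 S pos w v)"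
    unfolding Q1_def
    by (rule wd_minus, rule wd_sum[OF fin], rule face1) (use g in \<open>auto simp: goodall_def\<close>)
  then show ?thesis
    by (rule wirt_main(2)[where \<Omega>=UNIV]) (auto simp: action_eq)
qed

lemma open_goodall:
  fixes S :: "'v set set"
  assumes fin: "finite S"
  shows "open {\<zeta>. goodall S pos (z(u := \<zeta>))}"
proof -
  have e: "{\<zeta>. goodall S pos (z(u := \<zeta>))} = (\<Inter>f\<in>S. {\<zeta>. Im (((z(u := \<zeta>)) (lc pos f) - (z(u := \<zeta>)) (la pos f)) * cnj ((z(u := \<zeta>)) (lb pos f) - (z(u := \<zeta>)) (la pos f))) \<noteq> 0})"
    by (auto simp: goodall_def good3_def)
  show ?thesis unfolding e
    apply (rule open_INT[OF fin])
    apply (rule ballI)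
    apply (rule open_Collect_neq)
     apply (simp only: upd)
    by (auto intro!: continuous_intros)
qed

lemma second_deriv:
  fixes S :: "'v set set"
  assumes fin: "finite S" and g: "goodall S pos z"
  shows "wirt_z u (wirt_zbar v (\<lambda>w. complex_of_real (action S pos w))) z =
     - (\<Sum>f\<in>S. rn (Uf (la pos f) (lb pos f) (lc pos f) z) * dU (la pos f) (lb pos f) (lc pos f) u z * cnj (dU (la pos f) (lb pos f) (lc pos f) v z))"
proof -
  have W: "wd (\<lambda>\<zeta>. - (\<Sum>f\<in>S. qn (Uf (la pos f) (lb pos f) (lc pos f) (z(u:=\<zeta>))) * cnj (dU (la pos f) (lb pos f) (lc pos f) v (z(u:=\<zeta>))))) (z u)
     (- (\<Sum>f\<in>S. rn (Uf (la pos f) (lb pos f) (lc pos f) z) * dU (la pos f) (lb pos f) (lc pos f) u z * cnj (dU (la pos f) (lb pos f) (lc pos f) v z)))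
     (- (\<Sum>f\<in>S. qn (Uf (la pos f) (lb pos f) (lc pos f) z) * cnj (ddU (la pos f) (lb pos f) (lc pos f) v u z) + sn (Uf (la pos f) (lb pos f) (lc pos f) z) * cnj (dU (la pos f) (lb pos f) (lc pos f) u z) * cnj (dU (la pos f) (lb pos f) (lc pos f) v z)))"
    by (rule wd_minus, rule wd_sum[OF fin], rule face2) (use g in \<open>auto simp: goodall_def\<close>)
  show ?thesis
  proof (rule wirt_main(1)[where z=z and u=u, OF W open_goodall[OF fin, of pos z u]])
    show "z u \<in> {\<zeta>. goodall S pos (z(u := \<zeta>))}" using g by simp
    fix \<zeta> assume "\<zeta> \<in> {\<zeta>. goodall S pos (z(u := \<zeta>))}"
    then show "wirt_zbar v (\<lambda>w. complex_of_real (action S pos w)) (z(u := \<zeta>)) =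
         - (\<Sum>f\<in>S. qn (Uf (la pos f) (lb pos f) (lc pos f) (z(u := \<zeta>))) * cnj (dU (la pos f) (lb pos f) (lc pos f) v (z(u := \<zeta>))))"
      using first_deriv[OF fin] by (simp add: Q1_def)
  qed
qed



lemma pure_alg:
  fixes x y X Y da db dc Ea Eb Ec ix iy iw iX iY iW :: complex
  assumes n: "x*ix = 1" "y*iy = 1" "(x-y)*iw = 1" "X*iX = 1" "Y*iY = 1" "(X-Y)*iW = 1"
  shows "- ((x*Y - y*X)*ix*iX*iy*iY*iw*iW * ((dc-da)*x - y*(db-da)) * ((Ec-Ea)*X - Y*(Eb-Ea)))
   = - ((db - da)*ix) * ((Eb-Ec)*iW) - ((db - dc)*iw) * ((Ec-Ea)*iY) - ((dc - da)*iy) * ((Eb-Ea)*iX)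
     + ((db - dc)*iw) * ((Eb-Ea)*iX) + ((dc - da)*iy) * ((Eb-Ec)*iW) + ((db - da)*ix) * ((Ec-Ea)*iY)"
  using n by algebra

lemma face_alg:
  fixes za zb zc da db dc ea eb ec :: complex
  defines "U \<equiv> (zc - za) / (zb - za)"
  assumes ne: "zb \<noteq> za" "zc \<noteq> za" "zc \<noteq> zb" and im: "Im U \<noteq> 0"
  shows "- (rn U * (((dc - da) * (zb - za) - (zc - za) * (db - da)) / ((zb - za) * (zb - za)))
            * cnj (((ec - ea) * (zb - za) - (zc - za) * (eb - ea)) / ((zb - za) * (zb - za))))
   = (1/(4*\<i>)) * (
      - ((da/(za - zb) + db/(zb - za)) * cnj (eb/(zb - zc) + ec/(zc - zb)))
      - (db/(zb - zc) + dc/(zc - zb)) * cnj (ec/(zc - za) + ea/(za - zc))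
      - (dc/(zc - za) + da/(za - zc)) * cnj (ea/(za - zb) + eb/(zb - za))
      + (db/(zb - zc) + dc/(zc - zb)) * cnj (ea/(za - zb) + eb/(zb - za))
      + (dc/(zc - za) + da/(za - zc)) * cnj (eb/(zb - zc) + ec/(zc - zb))
      + (da/(za - zb) + db/(zb - za)) * cnj (ec/(zc - za) + ea/(za - zc)))"
proof -
  define x where "x = zb - za"
  define y where "y = zc - za"
  have n1: "x \<noteq> 0" "y \<noteq> 0" "x - y \<noteq> 0" using ne by (auto simp: x_def y_def)
  then have n2: "cnj x \<noteq> 0" "cnj y \<noteq> 0" "cnj x - cnj y \<noteq> 0"
    by (metis complex_cnj_zero_iff complex_cnj_diff)+
  have u: "U \<noteq> 0" "1 - U \<noteq> 0" "cnj U \<noteq> 0" "1 - cnj U \<noteq> 0" using im by (auto simp: complex_eq_iff)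
  have r: "rn U = (1/(4*\<i>)) * (x * cnj x * (x * cnj y - y * cnj x) / (y * cnj y * (x - y) * (cnj x - cnj y)))"
    using n1 n2 u unfolding rn_def U_def x_def[symmetric] y_def[symmetric]
    by (simp add: field_simps)
  have e: "za - zb = -x" "zb - za = x" "zc - za = y" "za - zc = -y" "zb - zc = x - y" "zc - zb = -(x - y)"
    by (auto simp: x_def y_def)
  have P: "- ((x*cnj y - y*cnj x)*inverse x*inverse (cnj x)*inverse y*inverse (cnj y)*inverse (x-y)*inverse (cnj x - cnj y) * ((dc-da)*x - y*(db-da)) * ((cnj ec-cnj ea)*cnj x - cnj y*(cnj eb-cnj ea)))
   = - ((db - da)*inverse x) * ((cnj eb-cnj ec)*inverse (cnj x - cnj y)) - ((db - dc)*inverse (x-y)) * ((cnj ec-cnj ea)*inverse (cnj y)) - ((dc - da)*inverse y) * ((cnj eb-cnj ea)*inverse (cnj x))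
     + ((db - dc)*inverse (x-y)) * ((cnj eb-cnj ea)*inverse (cnj x)) + ((dc - da)*inverse y) * ((cnj eb-cnj ec)*inverse (cnj x - cnj y)) + ((db - da)*inverse x) * ((cnj ec-cnj ea)*inverse (cnj y))"
    by (rule pure_alg) (use n1 n2 in auto)
  have h: "x * inverse x = 1" "y * inverse y = 1" "(x-y) * inverse (x-y) = 1"
     "cnj x * inverse (cnj x) = 1" "cnj y * inverse (cnj y) = 1" "(cnj x - cnj y) * inverse (cnj x - cnj y) = 1"
    using n1 n2 by auto
  show ?thesis
    unfolding r e
    apply (simp only: divide_inverse complex_cnj_mult complex_cnj_inverse complex_cnj_diff complex_cnj_minus
       complex_cnj_add inverse_minus_eq inverse_mult_distrib)
    using P h by algebra
qed

definition gEt :: "'v \<Rightarrow> 'v \<Rightarrow> 'v \<Rightarrow> 'v set \<Rightarrow> 'v set \<Rightarrow> complex" where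
  "gEt a b c e e' =
     (if e = {a,b} \<and> e' = {b,c} then -1 else 0) + (if e = {b,c} \<and> e' = {c,a} then -1 else 0) +
     (if e = {c,a} \<and> e' = {a,b} then -1 else 0) + (if e = {b,c} \<and> e' = {a,b} then 1 else 0) +
     (if e = {c,a} \<and> e' = {b,c} then 1 else 0) + (if e = {a,b} \<and> e' = {c,a} then 1 else 0)"

lemma gEt_rot: "gEt a b c e e' = gEt b c a e e'"
proof -
  have "{c,a} = {a,c}" by auto
  then show ?thesis unfolding gEt_def by (simp only: add.commute add.left_commute)
qed

lemma card3_distinct: "card {a,b,c} = 3 \<Longrightarrow> a \<noteq> b \<and> b \<noteq> c \<and> a \<noteq> c"
  by (auto simp: card_insert_if split: if_splits)

lemma gEt_zero: assumes H: "e \<union> e' \<noteq> {a,b,c}" shows "gEt a b c e e' = 0"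
proof -
  have U0: "{a,b} \<union> {b,c} = {a,b,c}" by auto
  have N0: "\<not> (e = {a,b} \<and> e' = {b,c})" using H U0 by (auto simp del: Un_insert_left Un_insert_right)
  have U1: "{b,c} \<union> {c,a} = {a,b,c}" by auto
  have N1: "\<not> (e = {b,c} \<and> e' = {c,a})" using H U1 by (auto simp del: Un_insert_left Un_insert_right)
  have U2: "{c,a} \<union> {a,b} = {a,b,c}" by auto
  have N2: "\<not> (e = {c,a} \<and> e' = {a,b})" using H U2 by (auto simp del: Un_insert_left Un_insert_right)
  have U3: "{b,c} \<union> {a,b} = {a,b,c}" by auto
  have N3: "\<not> (e = {b,c} \<and> e' = {a,b})" using H U3 by (auto simp del: Un_insert_left Un_insert_right)
  have U4: "{c,a} \<union> {b,c} = {a,b,c}" by auto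
  have N4: "\<not> (e = {c,a} \<and> e' = {b,c})" using H U4 by (auto simp del: Un_insert_left Un_insert_right)
  have U5: "{a,b} \<union> {c,a} = {a,b,c}" by auto
  have N5: "\<not> (e = {a,b} \<and> e' = {c,a})" using H U5 by (auto simp del: Un_insert_left Un_insert_right)
  show ?thesis unfolding gEt_def by (simp only: N0 N1 N2 N3 N4 N5 if_False) simp
qed

lemma gEt_val1: "a \<noteq> b \<Longrightarrow> b \<noteq> c \<Longrightarrow> a \<noteq> c \<Longrightarrow> gEt a b c {a,b} {b,c} = -1"
  unfolding gEt_def by (simp add: doubleton_eq_iff)

lemma gEt_val2: "a \<noteq> b \<Longrightarrow> b \<noteq> c \<Longrightarrow> a \<noteq> c \<Longrightarrow> gEt a b c {b,c} {a,b} = 1"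
  unfolding gEt_def by (simp add: doubleton_eq_iff)

locale tri =
  fixes S :: "'v set set" and pos :: "('v \<times> 'v \<times> 'v) set"
  assumes O: "orientation S pos" and C3: "\<And>f. f \<in> S \<Longrightarrow> card f = 3" and FS: "finite S"
begin

lemma pos_S: "(a,b,c) \<in> pos \<Longrightarrow> {a,b,c} \<in> S"
  using O unfolding orientation_def by fast

lemma pos_rot: "(a,b,c) \<in> pos \<Longrightarrow> (b,c,a) \<in> pos"
  using O unfolding orientation_def by fast

lemma pos_nrev: "(a,b,c) \<in> pos \<Longrightarrow> (a,c,b) \<notin> pos"
  using O unfolding orientation_def by fast

lemma pos_dist: assumes "(a,b,c) \<in> pos" shows "a \<noteq> b" "b \<noteq> c" "a \<noteq> c"
  using card3_distinct[OF C3[OF pos_S[OF assms]]] by auto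

lemma listing_facts: assumes "f \<in> S" shows "(la pos f, lb pos f, lc pos f) \<in> pos" "f = {la pos f, lb pos f, lc pos f}"
proof -
  have H: "\<forall>f\<in>S. \<exists>a b c. (a, b, c) \<in> pos \<and> f = {a, b, c}"
    using O unfolding orientation_def by (elim conjE)
  obtain a b c where abc: "(a,b,c) \<in> pos" "f = {a,b,c}"
    using bspec[OF H assms] by (elim exE conjE)
  have "\<exists>t. t \<in> pos \<and> f = {fst t, fst (snd t), snd (snd t)}"
    by (rule exI[of _ "(a,b,c)"]) (use abc in simp)
  then have "listing pos f \<in> pos \<and> f = {fst (listing pos f), fst (snd (listing pos f)), snd (snd (listing pos f))}"
    unfolding listing_def by (rule someI_ex)
  then show "(la pos f, lb pos f, lc pos f) \<in> pos" "f = {la pos f, lb pos f, lc pos f}"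
    by (simp_all add: la_def lb_def lc_def)
qed

lemma listing_rot: assumes p: "(a,b,c) \<in> pos"
  shows "(la pos {a,b,c}, lb pos {a,b,c}, lc pos {a,b,c}) \<in> {(a,b,c),(b,c,a),(c,a,b)}"
proof -
  define x where "x = la pos {a,b,c}"
  define y where "y = lb pos {a,b,c}"
  define w where "w = lc pos {a,b,c}"
  have xp: "(x,y,w) \<in> pos" and xe: "{a,b,c} = {x,y,w}"
    using listing_facts[OF pos_S[OF p]] by (simp_all add: x_def y_def w_def)
  have d1: "a \<noteq> b" "b \<noteq> c" "a \<noteq> c" using pos_dist[OF p] by auto
  have d2: "x \<noteq> y" "y \<noteq> w" "x \<noteq> w" using pos_dist[OF xp] by auto
  have m: "x \<in> {a,b,c}" "y \<in> {a,b,c}" "w \<in> {a,b,c}" unfolding xe by auto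
  have n1: "(a,c,b) \<notin> pos" by (rule pos_nrev[OF p])
  have n2: "(b,a,c) \<notin> pos" using n1 pos_rot by blast
  have n3: "(c,b,a) \<notin> pos" using n2 pos_rot by blast
  have "(x,y,w) \<in> {(a,b,c),(b,c,a),(c,a,b)}"
    using m d1 d2 xp n1 n2 n3 by auto
  then show ?thesis by (simp add: x_def y_def w_def)
qed

lemma G_pos: assumes p: "(a,b,c) \<in> pos"
  shows "gEt (la pos {a,b,c}) (lb pos {a,b,c}) (lc pos {a,b,c}) e e' = gEt a b c e e'"
  using listing_rot[OF p] gEt_rot[of a b c e e'] gEt_rot[of b c a e e'] by auto

lemma G_nz: assumes f: "f \<in> S" and nz: "gEt (la pos f) (lb pos f) (lc pos f) e e' \<noteq> 0"
  shows "e \<union> e' = f"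
  using gEt_zero nz listing_facts(2)[OF f] by metis

lemma sum_single:
  assumes f0: "f0 \<in> S" and z: "\<And>f. f \<in> S \<Longrightarrow> f \<noteq> f0 \<Longrightarrow> g f = 0"
  shows "(\<Sum>f\<in>S. g f) = g f0"
proof -
  have fin: "finite S" by (rule FS)
  show ?thesis
    using sum.remove[OF fin f0, of g] sum.neutral[of "S - {f0}" g] z by auto
qed

lemma Emat_decomp: "Emat pos e e' = (\<Sum>f\<in>S. gEt (la pos f) (lb pos f) (lc pos f) e e')"
proof (cases "e \<noteq> e' \<and> (\<exists>a b c. (a,b,c) \<in> pos \<and> e = {a,b} \<and> e' = {b,c})")
  case True
  then obtain a b c where abc: "(a,b,c) \<in> pos" "e = {a,b}" "e' = {b,c}" by blast
  have d: "a \<noteq> b" "b \<noteq> c" "a \<noteq> c" using pos_dist[OF abc(1)] by auto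
  have u: "e \<union> e' = {a,b,c}" unfolding abc(2,3) by auto
  have "(\<Sum>f\<in>S. gEt (la pos f) (lb pos f) (lc pos f) e e') = gEt (la pos {a,b,c}) (lb pos {a,b,c}) (lc pos {a,b,c}) e e'"
    by (rule sum_single[OF pos_S[OF abc(1)]]) (use G_nz u in metis)
  also have "\<dots> = -1" using G_pos[OF abc(1)] gEt_val1[OF d] abc by simp
  finally show ?thesis using True by (simp add: Emat_def)
next
  case nc1: False
  show ?thesis
  proof (cases "e \<noteq> e' \<and> (\<exists>a b c. (a,b,c) \<in> pos \<and> e = {b,c} \<and> e' = {a,b})")
    case True
    then obtain a b c where abc: "(a,b,c) \<in> pos" "e = {b,c}" "e' = {a,b}" by blast
    have d: "a \<noteq> b" "b \<noteq> c" "a \<noteq> c" using pos_dist[OF abc(1)] by auto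
    have u: "e \<union> e' = {a,b,c}" unfolding abc(2,3) by auto
    have "(\<Sum>f\<in>S. gEt (la pos f) (lb pos f) (lc pos f) e e') = gEt (la pos {a,b,c}) (lb pos {a,b,c}) (lc pos {a,b,c}) e e'"
      by (rule sum_single[OF pos_S[OF abc(1)]]) (use G_nz u in metis)
    also have "\<dots> = 1" using G_pos[OF abc(1)] gEt_val2[OF d] abc by simp
    finally show ?thesis using True nc1 by (simp add: Emat_def)
  next
    case nc2: False
    have "gEt (la pos f) (lb pos f) (lc pos f) e e' = 0" if f: "f \<in> S" for f
    proof -
      define a where "a = la pos f"
      define b where "b = lb pos f"
      define c where "c = lc pos f"
      have p: "(a,b,c) \<in> pos" using listing_facts(1)[OF f] by (simp add: a_def b_def c_def)
      have p2: "(b,c,a) \<in> pos" by (rule pos_rot[OF p])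
      have p3: "(c,a,b) \<in> pos" by (rule pos_rot[OF p2])
      have d: "a \<noteq> b" "b \<noteq> c" "a \<noteq> c" using pos_dist[OF p] by auto
      have ne: "{a,b} \<noteq> {b,c}" "{b,c} \<noteq> {c,a}" "{c,a} \<noteq> {a,b}" using d by (simp_all add: doubleton_eq_iff)
      have N0: "\<not> (e = {a,b} \<and> e' = {b,c})"
      proof
        assume h: "e = {a,b} \<and> e' = {b,c}"
        have ne': "e \<noteq> e'" using h ne by simp
        have ex: "(\<exists>a b c. (a,b,c) \<in> pos \<and> e = {a,b} \<and> e' = {b,c})"
          apply (rule exI[of _ a], rule exI[of _ b], rule exI[of _ c])
          using h p by simp
        from ne' ex have "e \<noteq> e' \<and> (\<exists>a b c. (a,b,c) \<in> pos \<and> e = {a,b} \<and> e' = {b,c})" by (rule conjI)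
        with nc1 show False by contradiction
      qed
      have N1: "\<not> (e = {b,c} \<and> e' = {c,a})"
      proof
        assume h: "e = {b,c} \<and> e' = {c,a}"
        have ne': "e \<noteq> e'" using h ne by simp
        have ex: "(\<exists>a b c. (a,b,c) \<in> pos \<and> e = {a,b} \<and> e' = {b,c})"
          apply (rule exI[of _ b], rule exI[of _ c], rule exI[of _ a])
          using h p2 by simp
        from ne' ex have "e \<noteq> e' \<and> (\<exists>a b c. (a,b,c) \<in> pos \<and> e = {a,b} \<and> e' = {b,c})" by (rule conjI)
        with nc1 show False by contradiction
      qed
      have N2: "\<not> (e = {c,a} \<and> e' = {a,b})"
      proof
        assume h: "e = {c,a} \<and> e' = {a,b}"
        have ne': "e \<noteq> e'" using h ne by simp
        have ex: "(\<exists>a b c. (a,b,c) \<in> pos \<and> e = {a,b} \<and> e' = {b,c})"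
          apply (rule exI[of _ c], rule exI[of _ a], rule exI[of _ b])
          using h p3 by simp
        from ne' ex have "e \<noteq> e' \<and> (\<exists>a b c. (a,b,c) \<in> pos \<and> e = {a,b} \<and> e' = {b,c})" by (rule conjI)
        with nc1 show False by contradiction
      qed
      have N3: "\<not> (e = {b,c} \<and> e' = {a,b})"
      proof
        assume h: "e = {b,c} \<and> e' = {a,b}"
        have ne': "e \<noteq> e'" using h ne by simp
        have ex: "(\<exists>a b c. (a,b,c) \<in> pos \<and> e = {b,c} \<and> e' = {a,b})"
          apply (rule exI[of _ a], rule exI[of _ b], rule exI[of _ c])
          using h p by simp
        from ne' ex have "e \<noteq> e' \<and> (\<exists>a b c. (a,b,c) \<in> pos \<and> e = {b,c} \<and> e' = {a,b})" by (rule conjI)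
        with nc2 show False by contradiction
      qed
      have N4: "\<not> (e = {c,a} \<and> e' = {b,c})"
      proof
        assume h: "e = {c,a} \<and> e' = {b,c}"
        have ne': "e \<noteq> e'" using h ne by simp
        have ex: "(\<exists>a b c. (a,b,c) \<in> pos \<and> e = {b,c} \<and> e' = {a,b})"
          apply (rule exI[of _ b], rule exI[of _ c], rule exI[of _ a])
          using h p2 by simp
        from ne' ex have "e \<noteq> e' \<and> (\<exists>a b c. (a,b,c) \<in> pos \<and> e = {b,c} \<and> e' = {a,b})" by (rule conjI)
        with nc2 show False by contradiction
      qed
      have N5: "\<not> (e = {a,b} \<and> e' = {c,a})"
      proof
        assume h: "e = {a,b} \<and> e' = {c,a}"
        have ne': "e \<noteq> e'" using h ne by simp
        have ex: "(\<exists>a b c. (a,b,c) \<in> pos \<and> e = {b,c} \<and> e' = {a,b})"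
          apply (rule exI[of _ c], rule exI[of _ a], rule exI[of _ b])
          using h p3 by simp
        from ne' ex have "e \<noteq> e' \<and> (\<exists>a b c. (a,b,c) \<in> pos \<and> e = {b,c} \<and> e' = {a,b})" by (rule conjI)
        with nc2 show False by contradiction
      qed
      show ?thesis unfolding a_def[symmetric] b_def[symmetric] c_def[symmetric] gEt_def
        by (simp only: N0 N1 N2 N3 N4 N5 if_False) simp
    qed
    then have "(\<Sum>f\<in>S. gEt (la pos f) (lb pos f) (lc pos f) e e') = 0" by (simp add: sum.neutral)
    moreover have "Emat pos e e' = 0" unfolding Emat_def by (simp only: if_not_P[OF nc1] if_not_P[OF nc2])
    ultimately show ?thesis by (simp only:)
  qed
qed

end



lemma sum_delta2:
  assumes "finite X" "P \<in> X" "Q \<in> X"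
  shows "(\<Sum>e\<in>X. \<Sum>e'\<in>X. if e = P \<and> e' = Q then h e e' else 0) = h P Q"
proof -
  have "(\<Sum>e'\<in>X. if e = P \<and> e' = Q then h e e' else 0) = (if e = P then h e Q else 0)" for e
    by (cases "e = P") (simp_all add: assms sum.delta)
  then show ?thesis by (simp add: assms sum.delta)
qed

lemma mul_if: "A * (if c then k else 0) * C = (if c then k * (A * C) else (0::complex))" by simp

lemma gEt_expand: "A * gEt a b c e e' * C =
   (if e = {a,b} \<and> e' = {b,c} then -1 * (A * C) else 0) + (if e = {b,c} \<and> e' = {c,a} then -1 * (A * C) else 0) +
   (if e = {c,a} \<and> e' = {a,b} then -1 * (A * C) else 0) + (if e = {b,c} \<and> e' = {a,b} then 1 * (A * C) else 0) +
   (if e = {c,a} \<and> e' = {b,c} then 1 * (A * C) else 0) + (if e = {a,b} \<and> e' = {c,a} then 1 * (A * C) else 0)"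
  unfolding gEt_def by (simp only: distrib_left distrib_right mul_if)

lemma local_sum:
  fixes X :: "'v set set" and h :: "'v set \<Rightarrow> 'v set \<Rightarrow> complex"
  assumes fin: "finite X" and m: "{a,b} \<in> X" "{b,c} \<in> X" "{c,a} \<in> X"
  shows "(\<Sum>e\<in>X. \<Sum>e'\<in>X. A e * gEt a b c e e' * C e') =
     - (A {a,b} * C {b,c}) - A {b,c} * C {c,a} - A {c,a} * C {a,b}
     + A {b,c} * C {a,b} + A {c,a} * C {b,c} + A {a,b} * C {c,a}"
  unfolding gEt_expand
  by (simp only: sum.distrib sum_delta2[OF fin] m) simp

lemma Amat2: assumes "x \<noteq> y" shows "Amat z u {x,y} = dl x u / (z x - z y) + dl y u / (z y - z x)"
proof (cases "u = x")
  case True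
  have "(THE w. w \<in> {x,y} \<and> w \<noteq> u) = y" using assms True by (intro the_equality) auto
  then show ?thesis using True assms by (simp add: Amat_def dl_def)
next
  case F1: False
  show ?thesis
  proof (cases "u = y")
    case True
    have "(THE w. w \<in> {x,y} \<and> w \<noteq> u) = x" using assms True by (intro the_equality) auto
    then show ?thesis using True assms by (simp add: Amat_def dl_def)
  next
    case False
    then show ?thesis using F1 by (simp add: Amat_def dl_def)
  qed
qed


lemma Im_Uf_eq: "Im (Uf a b c w) = Im ((w c - w a) * cnj (w b - w a)) / (cmod (w b - w a))^2"
  by (simp add: Uf_def Im_divide cmod_power2 algebra_simps)

lemma good3_facts: assumes g: "good3 a b c w" shows "w b \<noteq> w a" "w c \<noteq> w a" "w c \<noteq> w b"
proof -
  show "w b \<noteq> w a" using g by (auto simp: good3_def)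
  show "w c \<noteq> w a" using g by (auto simp: good3_def)
  show "w c \<noteq> w b"
  proof
    assume "w c = w b"
    then have "Im ((w c - w a) * cnj (w b - w a)) = 0"
      by (simp add: algebra_simps)
    then show False using g by (simp add: good3_def)
  qed
qed

theorem proposition4:
  fixes S :: "('v::finite) set set"
    and pos :: "('v \<times> 'v \<times> 'v) set"
    and z :: "'v \<Rightarrow> complex"
  assumes "sphere_triangulation S"
    and "orientation S pos"
    and "inj z"
    and "\<forall>f\<in>S. nondegenerate z f"
  shows "\<forall>u v. wirt_z u (wirt_zbar v (\<lambda>w. complex_of_real (action S pos w))) z =
           (1 / (4 * \<i>)) * (\<Sum>e\<in>edges S. \<Sum>e'\<in>edges S. Amat z u e * Emat pos e e' * cnj (Amat z v e'))"
proof (intro allI)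
  fix u v
  have FS: "finite S" by simp
  have FE: "finite (edges S)" by simp
  have C3: "\<And>f. f \<in> S \<Longrightarrow> card f = 3" using assms(1) by (simp add: sphere_triangulation_def)
  interpret tri S pos using assms(2) C3 FS by unfold_locales auto
  let ?a = "la pos" and ?b = "lb pos" and ?c = "lc pos"
  have fd: "?a f \<noteq> ?b f" "?b f \<noteq> ?c f" "?a f \<noteq> ?c f" if "f \<in> S" for f
    using pos_dist[OF listing_facts(1)[OF that]] by auto
  have g3: "good3 (?a f) (?b f) (?c f) z" if f: "f \<in> S" for f
  proof -
    have nd: "nondegenerate z f" using assms(4) f by auto
    have fe: "f = {?a f, ?b f, ?c f}" by (rule listing_facts(2)[OF f])
    have mem: "?a f \<in> f" "?b f \<in> f" "?c f \<in> f" by (subst fe, simp)+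
    have "Im ((z (?c f) - z (?a f)) / (z (?b f) - z (?a f))) \<noteq> 0"
      using nd mem fd[OF f] unfolding nondegenerate_def by metis
    then have "Im (Uf (?a f) (?b f) (?c f) z) \<noteq> 0" by (simp add: Uf_def)
    then show ?thesis unfolding good3_def using Im_Uf_eq by (metis div_0)
  qed
  have gz: "goodall S pos z" using g3 by (simp add: goodall_def)
  define Loc where "Loc f = (- (Amat z u {?a f, ?b f} * cnj (Amat z v {?b f, ?c f}))
      - Amat z u {?b f, ?c f} * cnj (Amat z v {?c f, ?a f}) - Amat z u {?c f, ?a f} * cnj (Amat z v {?a f, ?b f})
      + Amat z u {?b f, ?c f} * cnj (Amat z v {?a f, ?b f}) + Amat z u {?c f, ?a f} * cnj (Amat z v {?b f, ?c f})
      + Amat z u {?a f, ?b f} * cnj (Amat z v {?c f, ?a f}))" for f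
  have face: "- (rn (Uf (?a f) (?b f) (?c f) z) * dU (?a f) (?b f) (?c f) u z * cnj (dU (?a f) (?b f) (?c f) v z))
      = (1/(4*\<i>)) * Loc f" if f: "f \<in> S" for f
  proof -
    note gf = good3_facts[OF g3[OF f]]
    have im: "Im ((z (?c f) - z (?a f)) / (z (?b f) - z (?a f))) \<noteq> 0"
      using good3_Im[OF g3[OF f]] by (simp add: Uf_def)
    have ne2: "?c f \<noteq> ?a f" using fd[OF f] by auto
    show ?thesis
      unfolding Loc_def Amat2[OF fd(1)[OF f]] Amat2[OF fd(2)[OF f]] Amat2[OF ne2] Uf_def dU_def
      by (rule face_alg[OF gf im])
  qed
  have edges_in: "{?a f, ?b f} \<in> edges S" "{?b f, ?c f} \<in> edges S" "{?c f, ?a f} \<in> edges S" if f: "f \<in> S" for f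
  proof -
    have fe: "f = {?a f, ?b f, ?c f}" by (rule listing_facts(2)[OF f])
    have mem: "?a f \<in> f" "?b f \<in> f" "?c f \<in> f" by (subst fe, simp)+
    show "{?a f, ?b f} \<in> edges S" unfolding edges_def using fd[OF f] f mem by (intro CollectI conjI bexI[of _ f]) simp_all
    show "{?b f, ?c f} \<in> edges S" unfolding edges_def using fd[OF f] f mem by (intro CollectI conjI bexI[of _ f]) simp_all
    show "{?c f, ?a f} \<in> edges S" unfolding edges_def using fd[OF f] f mem by (intro CollectI conjI bexI[of _ f]) simp_all
  qed
  have rhs: "(\<Sum>e\<in>edges S. \<Sum>e'\<in>edges S. Amat z u e * Emat pos e e' * cnj (Amat z v e')) = (\<Sum>f\<in>S. Loc f)"
  proof -
    have "(\<Sum>e\<in>edges S. \<Sum>e'\<in>edges S. Amat z u e * Emat pos e e' * cnj (Amat z v e'))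
        = (\<Sum>e\<in>edges S. \<Sum>e'\<in>edges S. \<Sum>f\<in>S. Amat z u e * gEt (?a f) (?b f) (?c f) e e' * cnj (Amat z v e'))"
      by (simp only: Emat_decomp sum_distrib_left sum_distrib_right)
    also have "\<dots> = (\<Sum>f\<in>S. \<Sum>e\<in>edges S. \<Sum>e'\<in>edges S. Amat z u e * gEt (?a f) (?b f) (?c f) e e' * cnj (Amat z v e'))"
      by (simp only: sum.swap[of _ S])
    also have "\<dots> = (\<Sum>f\<in>S. Loc f)"
      by (rule sum.cong[OF refl], unfold Loc_def, rule local_sum[OF FE edges_in]) 
    finally show ?thesis .
  qed
  have "wirt_z u (wirt_zbar v (\<lambda>w. complex_of_real (action S pos w))) z =
     - (\<Sum>f\<in>S. rn (Uf (?a f) (?b f) (?c f) z) * dU (?a f) (?b f) (?c f) u z * cnj (dU (?a f) (?b f) (?c f) v z))"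
    by (rule second_deriv[OF FS gz])
  also have "\<dots> = (\<Sum>f\<in>S. - (rn (Uf (?a f) (?b f) (?c f) z) * dU (?a f) (?b f) (?c f) u z * cnj (dU (?a f) (?b f) (?c f) v z)))"
    by (simp add: sum_negf)
  also have "\<dots> = (\<Sum>f\<in>S. (1/(4*\<i>)) * Loc f)"
    by (rule sum.cong[OF refl]) (rule face)
  also have "\<dots> = (1/(4*\<i>)) * (\<Sum>f\<in>S. Loc f)"
    by (simp add: sum_distrib_left)
  finally show "wirt_z u (wirt_zbar v (\<lambda>w. complex_of_real (action S pos w))) z =
           (1 / (4 * \<i>)) * (\<Sum>e\<in>edges S. \<Sum>e'\<in>edges S. Amat z u e * Emat pos e e' * cnj (Amat z v e'))"
    by (simp only: rhs)
qed


end
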